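(* For all integers $n\geq 1$ and $0\leq k\leq n-1$, $$Q_{n,k}(x-t-1,t)=\sum_{T\in \mathcal P_{n,k}}x^{\mathrm{young}_T(1)}\,t^{\mathrm{eld}(T)}.$$
   Context: Define polynomials $Q_n(x,y,z,t)$ by $Q_1=1$ and $Q_{n+1}=[x+nz+(y+t)(n+y\partial_y)]Q_n$ for $n\ge1$, and define $Q_{n,k}(x,t)$ by $Q_n(x,y,1,t)=\sum_{k=0}^{n-1}Q_{n,k}(x,t)y^k$. All trees are rooted trees whose vertices are labeled by distinct positive integers. A vertex $j$ is a descendant of $i$ if the path from the root to $j$ passes through $i$ (every vertex is a descendant of itself); $\beta_T(i)$ is the smallest descendant of $i$ in $T$. If $j$ is a descendant of $i$ joined to $i$ by an edge, $j$ is a child of $i$ and the edge is written $(i,j)$; two children of the same vertex are brothers. A plane tree is a rooted tree in which the children of each vertex are linearly ordered (left to right). In a plane tree $T$, a vertex $j$ is elder if it has a brother $k$ to its right with $\beta_T(k)<\beta_T(j)$; otherwise $j$ is younger. $\mathrm{eld}_T(v)$ is the number of elder children of $v$, $\mathrm{eld}(T)$ is the total number of elder vertices of $T$, $\deg_T(v)$ is the number of children of $v$, and $\mathrm{young}_T(v)=\deg_T(v)-\mathrm{eld}_T(v)$. An edge $(i,j)$ is proper if $j$ is an elder child of $i$ or $i<\beta_T(j)$; otherwise it is improper. $\mathcal P_{n,k}$ denotes the set of plane trees on vertex set $[n]=\{1,\dots,n\}$ (with arbitrary root) having exactly $k$ improper edges; $\mathrm{young}_T(1)$ refers to the vertex labeled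 $1$. *)

theory Defs
  imports "HOL-Computational_Algebra.Polynomial"
begin

text \<open>For fixed values of x, z, t, the polynomial Q_n(x,y,z,t) is represented as a
  univariate polynomial in y (type real poly).  The recurrence
  Q_{n+1} = [x + n z + (y+t)(n + y d/dy)] Q_n is transcribed literally.\<close>

fun Qy :: "nat \<Rightarrow> real \<Rightarrow> real \<Rightarrow> real \<Rightarrow> real poly" where
  "Qy 0 x z t = 0"
| "Qy (Suc 0) x z t = 1"
| "Qy (Suc (Suc m)) x z t =
     (let n = Suc m; Q = Qy n x z t in
      smult (x + real n * z) Q + [:t, 1:] * (smult (real n) Q + [:0, 1:] * pderiv Q))"

definition Qnk :: "nat \<Rightarrow> nat \<Rightarrow> real \<Rightarrow> real \<Rightarrow> real" where
  "Qnk n k x t = coeff (Qy n x 1 t) k"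

datatype ptree = PNode nat "ptree list"

fun root :: "ptree \<Rightarrow> nat" where "root (PNode v cs) = v"
fun kids :: "ptree \<Rightarrow> ptree list" where "kids (PNode v cs) = cs"

fun labels :: "ptree \<Rightarrow> nat list" where
  "labels (PNode v cs) = v # concat (map labels cs)"

fun subtrees :: "ptree \<Rightarrow> ptree list" where
  "subtrees (PNode v cs) = PNode v cs # concat (map subtrees cs)"

definition beta :: "ptree \<Rightarrow> nat" where
  "beta s = Min (set (labels s))"

definition is_elder :: "ptree list \<Rightarrow> nat \<Rightarrow> bool" where
  "is_elder cs i \<longleftrightarrow> (\<exists>j. i < j \<and> j < length cs \<and> beta (cs ! j) < beta (cs ! i))"

definition eld_node :: "ptree list \<Rightarrow> nat" where
  "eld_node cs = card {i. i < length cs \<and> is_elder cs i}"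

definition eld :: "ptree \<Rightarrow> nat" where
  "eld T = sum_list (map (\<lambda>s. eld_node (kids s)) (subtrees T))"

definition young_at :: "ptree \<Rightarrow> nat \<Rightarrow> nat" where
  "young_at T v = sum_list (map (\<lambda>s. if root s = v then length (kids s) - eld_node (kids s) else 0)
                                 (subtrees T))"

definition improper_node :: "nat \<Rightarrow> ptree list \<Rightarrow> nat" where
  "improper_node v cs = card {i. i < length cs \<and> \<not> is_elder cs i \<and> \<not> v < beta (cs ! i)}"

definition improper :: "ptree \<Rightarrow> nat" where
  "improper T = sum_list (map (\<lambda>s. improper_node (root s) (kids s)) (subtrees T))"

definition P :: "nat \<Rightarrow> nat \<Rightarrow> ptree set" where
  "P n k = {T. distinct (labels T) \<and> set (labels T) = {1..n} \<and> improper T = k}"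

end

theory Submission
  imports Defs
begin

fun cntL :: "('a \<Rightarrow> 'a list \<Rightarrow> bool) \<Rightarrow> 'a list \<Rightarrow> nat" where
  "cntL Q [] = 0"
| "cntL Q (b # bs) = (if Q b bs then 1 else 0) + cntL Q bs"

lemma card_cntL:
  "card {i. i < length bs \<and> Q (bs ! i) (drop (Suc i) bs)} = cntL Q bs"
proof (induction bs)
  case Nil then show ?case by simp
next
  case (Cons b bs)
  have eq: "{i. i < length (b # bs) \<and> Q ((b # bs) ! i) (drop (Suc i) (b # bs))}
     = (if Q b bs then {0} else {}) \<union> Suc ` {i. i < length bs \<and> Q (bs ! i) (drop (Suc i) bs)}"
    by (auto simp: image_iff less_Suc_eq_0_disj)
  have "card (Suc ` {i. i < length bs \<and> Q (bs ! i) (drop (Suc i) bs)}) = cntL Q bs"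
    using Cons by (simp add: card_image)
  then show ?case unfolding eq by (auto simp: card_insert_if)
qed

lemma filter_cntL:
  "length (filter (\<lambda>i. Q (bs ! i) (drop (Suc i) bs)) [0..<length bs]) = cntL Q bs"
proof -
  have "length (filter (\<lambda>i. Q (bs ! i) (drop (Suc i) bs)) [0..<length bs])
     = card {i. i < length bs \<and> Q (bs ! i) (drop (Suc i) bs)}"
    by (simp add: length_filter_conv_card cong: conj_cong)
  then show ?thesis by (simp add: card_cntL)
qed

lemma cntL_append:
  "cntL Q (xs @ ys) = cntL (\<lambda>b r. Q b (r @ ys)) xs + cntL Q ys"
  by (induction xs) auto

lemma cntL_cong:
  "(\<And>b r. b \<in> set xs \<Longrightarrow> set r \<subseteq> set xs \<Longrightarrow> Q b r = Q' b r) \<Longrightarrow> cntL Q xs = cntL Q' xs"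
  by (induction xs) auto

lemma cntL_le: "cntL Q xs \<le> length xs"
  by (induction xs) auto

definition elP :: "nat \<Rightarrow> nat list \<Rightarrow> bool" where
  "elP b r \<longleftrightarrow> (\<exists>c\<in>set r. c < b)"

definition imP :: "nat \<Rightarrow> nat \<Rightarrow> nat list \<Rightarrow> bool" where
  "imP v b r \<longleftrightarrow> \<not> elP b r \<and> \<not> v < b"

lemma is_elder_alt:
  assumes "i < length cs"
  shows "is_elder cs i \<longleftrightarrow> elP (map beta cs ! i) (drop (Suc i) (map beta cs))"
proof -
  have "(\<exists>c\<in>set (drop (Suc i) (map beta cs)). c < map beta cs ! i) \<longleftrightarrow>
        (\<exists>j. i < j \<and> j < length cs \<and> beta (cs ! j) < beta (cs ! i))"
  proof
    assume "\<exists>c\<in>set (drop (Suc i) (map beta cs)). c < map beta cs ! i"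
    then obtain k where "k < length cs - Suc i" "map beta cs ! (Suc i + k) < map beta cs ! i"
      by (auto simp: in_set_conv_nth)
    then show "\<exists>j. i < j \<and> j < length cs \<and> beta (cs ! j) < beta (cs ! i)"
      using assms by (intro exI[of _ "Suc i + k"]) auto
  next
    assume "\<exists>j. i < j \<and> j < length cs \<and> beta (cs ! j) < beta (cs ! i)"
    then obtain j where j: "i < j" "j < length cs" "beta (cs ! j) < beta (cs ! i)" by blast
    then have "map beta cs ! j \<in> set (drop (Suc i) (map beta cs))"
      by (auto simp: in_set_conv_nth intro!: exI[of _ "j - Suc i"])
    then show "\<exists>c\<in>set (drop (Suc i) (map beta cs)). c < map beta cs ! i"
      using j assms by auto
  qed
  then show ?thesis unfolding is_elder_def elP_def by simp
qed

lemma eld_node_cntL: "eld_node cs = cntL elP (map beta cs)"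
proof -
  have "{i. i < length cs \<and> is_elder cs i} =
        {i. i < length (map beta cs) \<and> elP (map beta cs ! i) (drop (Suc i) (map beta cs))}"
    using is_elder_alt by auto
  then show ?thesis unfolding eld_node_def using card_cntL[of "map beta cs" elP] by simp
qed

lemma improper_node_cntL: "improper_node v cs = cntL (imP v) (map beta cs)"
proof -
  have "{i. i < length cs \<and> \<not> is_elder cs i \<and> \<not> v < beta (cs ! i)} =
        {i. i < length (map beta cs) \<and> imP v (map beta cs ! i) (drop (Suc i) (map beta cs))}"
    using is_elder_alt by (auto simp: imP_def)
  then show ?thesis unfolding improper_node_def using card_cntL[of "map beta cs" "imP v"] by simp
qed

lemma labels_ne: "labels s \<noteq> []"
  by (cases s) auto

lemma beta_in: "beta s \<in> set (labels s)"
  unfolding beta_def using labels_ne by (simp add: Min_in)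

lemma beta_le: "l \<in> set (labels s) \<Longrightarrow> beta s \<le> l"
  unfolding beta_def by simp

lemma beta_eqI: "b \<in> set (labels s) \<Longrightarrow> (\<And>l. l \<in> set (labels s) \<Longrightarrow> b \<le> l) \<Longrightarrow> beta s = b"
  by (meson beta_in beta_le le_antisym)

lemma sum_list_concat_map: "sum_list (concat (map f xs)) = sum_list (map (\<lambda>x. sum_list (f x)) xs)"
  by (induction xs) auto

lemma subtrees_PNode: "subtrees (PNode v cs) = PNode v cs # concat (map subtrees cs)"
  by simp

lemma eld_PNode: "eld (PNode v cs) = eld_node cs + sum_list (map eld cs)"
  unfolding eld_def by (simp add: map_concat sum_list_concat_map comp_def)

lemma improper_PNode: "improper (PNode v cs) = improper_node v cs + sum_list (map improper cs)"
  unfolding improper_def by (simp add: map_concat sum_list_concat_map comp_def)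

lemma young_PNode: "young_at (PNode v cs) u =
   (if v = u then length cs - eld_node cs else 0) + sum_list (map (\<lambda>c. young_at c u) cs)"
  unfolding young_at_def by (simp add: map_concat sum_list_concat_map comp_def)

definition Wloc :: "real \<Rightarrow> real \<Rightarrow> nat \<Rightarrow> nat list \<Rightarrow> real poly" where
  "Wloc x t v bs = monom ((if v = 1 then x ^ (length bs - cntL elP bs) else 1) * t ^ cntL elP bs)
                        (cntL (imP v) bs)"

fun Wr :: "real \<Rightarrow> real \<Rightarrow> ptree \<Rightarrow> real poly" where
  "Wr x t (PNode v cs) = Wloc x t v (map beta cs) * prod_list (map (Wr x t) cs)"

lemma prod_list_monom:
  "prod_list (map (\<lambda>c. monom (f c) (g c)) cs) = monom (prod_list (map f cs)) (sum_list (map g cs))"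
  by (induction cs) (auto simp: mult_monom)

lemma prod_list_pow2:
  "prod_list (map (\<lambda>c. (x::real) ^ f c * t ^ g c) cs) = x ^ sum_list (map f cs) * t ^ sum_list (map g cs)"
  by (induction cs) (auto simp: power_add)

lemma Wr_eq: "Wr x t T = monom (x ^ young_at T 1 * t ^ eld T) (improper T)"
proof (induction T)
  case (PNode v cs)
  have "map (Wr x t) cs = map (\<lambda>c. monom (x ^ young_at c 1 * t ^ eld c) (improper c)) cs"
    using PNode by auto
  then have "prod_list (map (Wr x t) cs) =
     monom (x ^ sum_list (map (\<lambda>c. young_at c 1) cs) * t ^ sum_list (map eld cs))
           (sum_list (map improper cs))"
    by (simp only: prod_list_monom prod_list_pow2)
  then show ?case
    by (simp add: Wloc_def mult_monom eld_PNode improper_PNode young_PNode eld_node_cntL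
        improper_node_cntL power_add)
qed

definition leafOps :: "nat \<Rightarrow> nat \<Rightarrow> ptree list \<Rightarrow> ptree list" where
  "leafOps N v cs = map (\<lambda>i. PNode v (take i cs @ PNode N [] # drop i cs)) [0..<Suc (length cs)]"

definition impAt :: "nat \<Rightarrow> ptree list \<Rightarrow> nat \<Rightarrow> bool" where
  "impAt v cs i \<longleftrightarrow> imP v (beta (cs ! i)) (drop (Suc i) (map beta cs))"

definition impOps :: "nat \<Rightarrow> nat \<Rightarrow> ptree list \<Rightarrow> ptree list" where
  "impOps N v cs = concat (map (\<lambda>i. [PNode N (take i cs @ [cs ! i, PNode v (drop (Suc i) cs)]),
                         PNode N (take i cs @ [PNode v (drop (Suc i) cs), cs ! i])])
              (filter (impAt v cs) [0..<length cs]))"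

function insL :: "nat \<Rightarrow> ptree \<Rightarrow> ptree list" where
  "insL N (PNode v cs) =
    PNode N [PNode v cs] # leafOps N v cs @ impOps N v cs
    @ concat (map (\<lambda>i. map (\<lambda>s'. PNode v (cs[i := s'])) (insL N (cs ! i))) [0..<length cs])"
  by pat_completeness auto
termination
proof (relation "measure (\<lambda>(N, t). size t)")
  show "wf (measure (\<lambda>(N, t). size t))" by simp
next
  fix N v and cs :: "ptree list" and i :: nat
  assume "i \<in> set [0..<length cs]"
  then have "cs ! i \<in> set cs" by simp
  then have "size (cs ! i) \<le> size_list size cs" by (rule size_list_estimation') simp
  then show "((N, cs ! i), N, PNode v cs) \<in> measure (\<lambda>(N, t). size t)" by simp
qed

definition delroot :: "ptree list \<Rightarrow> ptree" where
  "delroot cs = (if length cs = 1 then hd cs else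
     (let a = cs ! (length cs - 2); b = last cs; L = take (length cs - 2) cs in
      if beta a < beta b then PNode (root b) (L @ a # kids b) else PNode (root a) (L @ b # kids a)))"

fun del :: "nat \<Rightarrow> ptree \<Rightarrow> ptree" where
  "del N (PNode v cs) = (if v = N then delroot cs
     else PNode v (concat (map (\<lambda>c. if c = PNode N [] then [] else [del N c]) cs)))"

lemma del_id: "N \<notin> set (labels s) \<Longrightarrow> del N s = s"
proof (induction s)
  case (PNode v cs)
  have v: "v \<noteq> N" using PNode.prems by simp
  have "\<And>c. c \<in> set cs \<Longrightarrow> (if c = PNode N [] then [] else [del N c]) = [c]"
  proof -
    fix c assume c: "c \<in> set cs"
    then have "N \<notin> set (labels c)" using PNode.prems by auto
    then show "(if c = PNode N [] then [] else [del N c]) = [c]"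
      using PNode.IH[OF c] by auto
  qed
  then have "map (\<lambda>c. if c = PNode N [] then [] else [del N c]) cs = map (\<lambda>c. [c]) cs"
    by (rule map_cong[OF refl])
  moreover have "concat (map (\<lambda>c. [c]) cs) = cs" by (induction cs) simp_all
  ultimately have "concat (map (\<lambda>c. if c = PNode N [] then [] else [del N c]) cs) = cs"
    by metis
  then show ?case using v by simp
qed

lemma mem_leafOps: "s' \<in> set (leafOps N v cs) \<longleftrightarrow>
   (\<exists>i\<le>length cs. s' = PNode v (take i cs @ PNode N [] # drop i cs))"
  unfolding leafOps_def by (auto simp: less_Suc_eq_le atLeast0LessThan simp del: upt_Suc)

lemma mem_impOps: "s' \<in> set (impOps N v cs) \<longleftrightarrow>
   (\<exists>i<length cs. impAt v cs i \<and> (s' = PNode N (take i cs @ [cs ! i, PNode v (drop (Suc i) cs)]) \<or>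
       s' = PNode N (take i cs @ [PNode v (drop (Suc i) cs), cs ! i])))"
  unfolding impOps_def by auto

lemma mem_recs: "s' \<in> set (concat (map (\<lambda>i. map (\<lambda>s'. PNode v (cs[i := s'])) (f i)) [0..<length cs])) \<longleftrightarrow>
   (\<exists>i<length cs. \<exists>s''\<in>set (f i). s' = PNode v (cs[i := s'']))"
  by auto

lemma mset_split_nth:
  assumes "i < length cs"
  shows "mset (concat (map labels cs)) = mset (concat (map labels (take i cs))) + mset (labels (cs ! i))
      + mset (concat (map labels (drop (Suc i) cs)))"
proof -
  have "concat (map labels cs) = concat (map labels (take i cs @ cs ! i # drop (Suc i) cs))"
    using id_take_nth_drop[OF assms] by metis
  then show ?thesis by simp
qed

lemma mset_labels_concat_upd:
  assumes "i < length cs"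
  shows "mset (concat (map labels (cs[i := s']))) + mset (labels (cs ! i)) =
         mset (concat (map labels cs)) + mset (labels s')"
proof -
  have e: "cs[i := s'] = take i cs @ s' # drop (Suc i) cs" by (rule upd_conv_take_nth_drop[OF assms])
  have "mset (concat (map labels (cs[i := s']))) = mset (concat (map labels (take i cs))) + mset (labels s')
      + mset (concat (map labels (drop (Suc i) cs)))" unfolding e by simp
  then show ?thesis unfolding mset_split_nth[OF assms] by (simp add: add_ac)
qed

lemma insL_labels:
  "s' \<in> set (insL N s) \<Longrightarrow> mset (labels s') = add_mset N (mset (labels s))"
proof (induction N s arbitrary: s' rule: insL.induct)
  case (1 N v cs)
  have "s' = PNode N [PNode v cs] \<or> s' \<in> set (leafOps N v cs) \<or> s' \<in> set (impOps N v cs) \<or>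
     s' \<in> set (concat (map (\<lambda>i. map (\<lambda>s'. PNode v (cs[i := s'])) (insL N (cs ! i))) [0..<length cs]))"
    using "1.prems" by simp
  then consider
      (sub) "s' = PNode N [PNode v cs]"
    | (leaf) i where "i \<le> length cs" "s' = PNode v (take i cs @ PNode N [] # drop i cs)"
    | (impY) i where "i < length cs" "s' = PNode N (take i cs @ [cs ! i, PNode v (drop (Suc i) cs)])"
    | (impT) i where "i < length cs" "s' = PNode N (take i cs @ [PNode v (drop (Suc i) cs), cs ! i])"
    | (rec) i s'' where "i < length cs" "s'' \<in> set (insL N (cs ! i))" "s' = PNode v (cs[i := s''])"
    unfolding mem_leafOps mem_impOps mem_recs by blast
  then show ?case
  proof cases
    case sub then show ?thesis by simp
  next
    case (leaf i)
    have "concat (map labels cs) = concat (map labels (take i cs)) @ concat (map labels (drop i cs))"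
      by (metis append_take_drop_id concat_append map_append)
    then have "mset (concat (map labels cs)) = mset (concat (map labels (take i cs))) + mset (concat (map labels (drop i cs)))"
      by simp
    then show ?thesis using leaf by simp
  next
    case (impY i)
    show ?thesis using impY mset_split_nth[OF impY(1)] by simp
  next
    case (impT i)
    show ?thesis using impT mset_split_nth[OF impT(1)] by simp
  next
    case (rec i s'')
    have L: "mset (labels s'') = add_mset N (mset (labels (cs ! i)))"
      using "1.IH" rec by auto
    have "mset (concat (map labels (cs[i := s'']))) + mset (labels (cs ! i)) =
         mset (concat (map labels cs)) + mset (labels s'')"
      by (rule mset_labels_concat_upd[OF rec(1)])
    also have "\<dots> = add_mset N (mset (concat (map labels cs))) + mset (labels (cs ! i))"
      unfolding L by simp
    finally have F: "mset (concat (map labels (cs[i := s'']))) = add_mset N (mset (concat (map labels cs)))"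
      by (rule add_right_imp_eq)
    show ?thesis unfolding rec(3) labels.simps mset.simps F by (rule add_mset_commute)
  qed
qed

lemma concat_map_single: "(\<And>c. c \<in> set xs \<Longrightarrow> f c = [g c]) \<Longrightarrow> concat (map f xs) = map g xs"
  by (induction xs) auto

lemma dist_split:
  assumes "distinct (labels (PNode v (A @ c # B)))"
  shows "distinct (labels c)" "v \<notin> set (labels c)"
    "\<And>b. b \<in> set B \<Longrightarrow> set (labels b) \<inter> set (labels c) = {}"
    "\<And>b. b \<in> set A \<Longrightarrow> set (labels b) \<inter> set (labels c) = {}"
    "\<And>b. b \<in> set B \<Longrightarrow> v \<notin> set (labels b)"
  using assms by (auto simp: distinct_append)

lemma dist_child:
  assumes "distinct (labels (PNode v cs))" "c \<in> set cs"
  shows "distinct (labels c)" "v \<notin> set (labels c)"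
proof -
  obtain A B where "cs = A @ c # B" using assms(2) by (meson split_list)
  then show "distinct (labels c)" "v \<notin> set (labels c)" using dist_split assms(1) by blast+
qed

lemma beta_imP:
  assumes d: "distinct (labels (PNode v (A @ c # B)))" and im: "imP v (beta c) (map beta B)"
  shows "beta c < v" "\<And>b. b \<in> set B \<Longrightarrow> beta c < beta b" "beta c < beta (PNode v B)"
proof -
  have nv: "\<not> v < beta c" and nb: "\<And>b. b \<in> set B \<Longrightarrow> \<not> beta b < beta c"
    using im by (auto simp: imP_def elP_def)
  have "v \<noteq> beta c" using dist_split(2)[OF d] beta_in[of c] by auto
  then show v: "beta c < v" using nv by simp
  show b: "beta c < beta b" if "b \<in> set B" for b
  proof -
    have "beta b \<noteq> beta c" using dist_split(3)[OF d that] beta_in[of b] beta_in[of c] by auto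
    then show ?thesis using nb[OF that] by simp
  qed
  have "beta (PNode v B) \<in> set (labels (PNode v B))" by (rule beta_in)
  then have "beta (PNode v B) = v \<or> (\<exists>b\<in>set B. beta (PNode v B) \<in> set (labels b))" by auto
  then show "beta c < beta (PNode v B)"
  proof
    assume "\<exists>b\<in>set B. beta (PNode v B) \<in> set (labels b)"
    then obtain b where "b \<in> set B" "beta (PNode v B) \<in> set (labels b)" by blast
    then show ?thesis using b[of b] beta_le[of "beta (PNode v B)" b] by simp
  qed (use v in simp)
qed

lemma insL_root_cases:
  "s' \<in> set (insL N (PNode v cs)) \<Longrightarrow>
    s' = PNode N [PNode v cs]
  \<or> (\<exists>i\<le>length cs. s' = PNode v (take i cs @ PNode N [] # drop i cs))
  \<or> (\<exists>i<length cs. impAt v cs i \<and> (s' = PNode N (take i cs @ [cs ! i, PNode v (drop (Suc i) cs)]) \<or>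
       s' = PNode N (take i cs @ [PNode v (drop (Suc i) cs), cs ! i])))
  \<or> (\<exists>i<length cs. \<exists>s''\<in>set (insL N (cs ! i)). s' = PNode v (cs[i := s'']))"
proof -
  assume "s' \<in> set (insL N (PNode v cs))"
  then have "s' = PNode N [PNode v cs] \<or> s' \<in> set (leafOps N v cs) \<or> s' \<in> set (impOps N v cs) \<or>
     s' \<in> set (concat (map (\<lambda>i. map (\<lambda>s'. PNode v (cs[i := s'])) (insL N (cs ! i))) [0..<length cs]))"
    by simp
  then show ?thesis unfolding mem_leafOps mem_impOps mem_recs by blast
qed

lemma insL_not_leaf: "s' \<in> set (insL N s) \<Longrightarrow> s' \<noteq> PNode N []"
proof
  assume "s' \<in> set (insL N s)" "s' = PNode N []"
  then have "mset (labels (PNode N [])) = add_mset N (mset (labels s))" using insL_labels by blast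
  then have "size (mset (labels s)) = 0" by simp
  then show False using labels_ne[of s] by simp
qed

lemma N_in_insL: "s' \<in> set (insL N s) \<Longrightarrow> N \<in> set (labels s')"
proof -
  assume "s' \<in> set (insL N s)"
  then have "mset (labels s') = add_mset N (mset (labels s))" using insL_labels by blast
  then have "N \<in># mset (labels s')" by simp
  then show ?thesis by simp
qed

lemma del_insL:
  "distinct (labels s) \<Longrightarrow> N \<notin> set (labels s) \<Longrightarrow> s' \<in> set (insL N s) \<Longrightarrow> del N s' = s"
proof (induction N s arbitrary: s' rule: insL.induct)
  case (1 N v cs)
  have vN: "v \<noteq> N" using "1.prems"(2) by simp
  have cN: "\<And>c. c \<in> set cs \<Longrightarrow> N \<notin> set (labels c)" using "1.prems"(2) by auto
  have fid: "(if c = PNode N [] then [] else [del N c]) = [c]" if c: "c \<in> set cs" for c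
  proof -
    have "N \<notin> set (labels c)" by (rule cN[OF c])
    moreover then have "c \<noteq> PNode N []" by auto
    ultimately show ?thesis using del_id[of N c] by simp
  qed
  consider
      (sub) "s' = PNode N [PNode v cs]"
    | (leaf) i where "i \<le> length cs" "s' = PNode v (take i cs @ PNode N [] # drop i cs)"
    | (impY) i where "i < length cs" "impAt v cs i" "s' = PNode N (take i cs @ [cs ! i, PNode v (drop (Suc i) cs)])"
    | (impT) i where "i < length cs" "impAt v cs i" "s' = PNode N (take i cs @ [PNode v (drop (Suc i) cs), cs ! i])"
    | (rec) i s'' where "i < length cs" "s'' \<in> set (insL N (cs ! i))" "s' = PNode v (cs[i := s''])"
    using insL_root_cases[OF "1.prems"(3)] by blast
  then show ?case
  proof cases
    case sub
    then show ?thesis by (simp add: delroot_def)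
  next
    case (leaf i)
    note i = leaf(1) and s' = leaf(2)
    have t1: "concat (map (\<lambda>c. if c = PNode N [] then [] else [del N c]) (take i cs)) = map id (take i cs)"
      by (rule concat_map_single, subst fid, erule in_set_takeD, simp)
    have t2: "concat (map (\<lambda>c. if c = PNode N [] then [] else [del N c]) (drop i cs)) = map id (drop i cs)"
      by (rule concat_map_single, subst fid, erule in_set_dropD, simp)
    have "concat (map (\<lambda>c. if c = PNode N [] then [] else [del N c]) (take i cs @ PNode N [] # drop i cs))
        = take i cs @ drop i cs"
      using t1 t2 by simp
    then show ?thesis using s' vN by simp
  next
    case (impY i)
    note i = impY(1) and ia = impY(2) and s0 = impY(3)
    define A B c where "A = take i cs" "B = drop (Suc i) cs" "c = cs ! i"
    have cs: "cs = A @ c # B" unfolding A_B_c_def by (rule id_take_nth_drop[OF i])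
    have im: "imP v (beta c) (map beta B)" using ia unfolding impAt_def A_B_c_def by (simp add: drop_map)
    have d: "distinct (labels (PNode v (A @ c # B)))" using "1.prems"(1) cs by simp
    have lt: "beta c < beta (PNode v B)" by (rule beta_imP(3)[OF d im])
    have s': "s' = PNode N (A @ [c, PNode v B])" using s0 unfolding A_B_c_def by simp
    show ?thesis unfolding s' using lt cs by (simp add: delroot_def nth_append)
  next
    case (impT i)
    note i = impT(1) and ia = impT(2) and s0 = impT(3)
    define A B c where "A = take i cs" "B = drop (Suc i) cs" "c = cs ! i"
    have cs: "cs = A @ c # B" unfolding A_B_c_def by (rule id_take_nth_drop[OF i])
    have im: "imP v (beta c) (map beta B)" using ia unfolding impAt_def A_B_c_def by (simp add: drop_map)
    have d: "distinct (labels (PNode v (A @ c # B)))" using "1.prems"(1) cs by simp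
    have lt: "beta c < beta (PNode v B)" by (rule beta_imP(3)[OF d im])
    have s': "s' = PNode N (A @ [PNode v B, c])" using s0 unfolding A_B_c_def by simp
    show ?thesis unfolding s' using lt cs by (simp add: delroot_def nth_append)
  next
    case (rec i s'')
    note i = rec(1) and s'' = rec(2) and s' = rec(3)
    have ci: "cs ! i \<in> set cs" using i by simp
    have IH: "del N s'' = cs ! i"
      using "1.IH"[of i s''] i s'' dist_child[OF "1.prems"(1) ci] cN[OF ci] by simp
    have ns: "s'' \<noteq> PNode N []" using insL_not_leaf[OF s''] .
    have "(if c = PNode N [] then [] else [del N c]) = [del N c]" if c: "c \<in> set (cs[i := s''])" for c
    proof -
      have "c = s'' \<or> c \<in> set cs" using set_update_subset_insert[of cs i s''] c by blast
      then have "c \<noteq> PNode N []"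
      proof
        assume "c \<in> set cs" then have "N \<notin> set (labels c)" by (rule cN)
        then show ?thesis by auto
      qed (use ns in simp)
      then show ?thesis by simp
    qed
    then have e1: "concat (map (\<lambda>c. if c = PNode N [] then [] else [del N c]) (cs[i := s'']))
        = map (del N) (cs[i := s''])" by (rule concat_map_single)
    have M: "map (del N) cs = map id cs" by (rule map_cong[OF refl]) (simp add: del_id cN)
    have "map (del N) (cs[i := s'']) = (map (del N) cs)[i := cs ! i]" using IH by (simp add: map_update)
    also have "\<dots> = cs" unfolding M by simp
    finally show ?thesis using s' vN e1 by simp
  qed
qed

lemma insL_set: "set (insL N (PNode v cs)) = insert (PNode N [PNode v cs]) (set (leafOps N v cs) \<union> set (impOps N v cs)
   \<union> set (concat (map (\<lambda>i. map (\<lambda>s'. PNode v (cs[i := s'])) (insL N (cs ! i))) [0..<length cs])))"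
  by (simp add: Un_assoc)

lemma insL_subI: "PNode N [s] \<in> set (insL N s)"
  by (cases s) simp

lemma insL_leafI: "i \<le> length cs \<Longrightarrow> PNode v (take i cs @ PNode N [] # drop i cs) \<in> set (insL N (PNode v cs))"
  unfolding insL_set insert_iff Un_iff mem_leafOps by blast

lemma insL_YI: "i < length cs \<Longrightarrow> impAt v cs i \<Longrightarrow>
   PNode N (take i cs @ [cs ! i, PNode v (drop (Suc i) cs)]) \<in> set (insL N (PNode v cs))"
  unfolding insL_set insert_iff Un_iff mem_impOps by blast

lemma insL_TI: "i < length cs \<Longrightarrow> impAt v cs i \<Longrightarrow>
   PNode N (take i cs @ [PNode v (drop (Suc i) cs), cs ! i]) \<in> set (insL N (PNode v cs))"
  unfolding insL_set insert_iff Un_iff mem_impOps by blast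

lemma insL_recI: "i < length cs \<Longrightarrow> s'' \<in> set (insL N (cs ! i)) \<Longrightarrow>
   PNode v (cs[i := s'']) \<in> set (insL N (PNode v cs))"
  unfolding insL_set insert_iff Un_iff mem_recs by blast

lemma beta_sub: "r \<in> set cs \<Longrightarrow> beta (PNode u cs) \<le> beta r"
  using beta_in[of r] beta_le[of "beta r" "PNode u cs"] by auto

lemma beta_root: "beta (PNode u cs) \<le> u"
  using beta_le[of u "PNode u cs"] by simp

lemma insL_cover:
  "distinct (labels T) \<Longrightarrow> N \<in> set (labels T) \<Longrightarrow> T \<noteq> PNode N [] \<Longrightarrow> T \<in> set (insL N (del N T))"
proof (induction T)
  case (PNode v cs)
  show ?case
  proof (cases "v = N")
    case True
    have cN: "\<And>c. c \<in> set cs \<Longrightarrow> N \<notin> set (labels c)" using PNode.prems(1) True by auto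
    have ne: "cs \<noteq> []" using PNode.prems(3) True by auto
    show ?thesis
    proof (cases "length cs = 1")
      case True
      then obtain c where cs: "cs = [c]" by (cases cs) auto
      show ?thesis using `v = N` by (simp add: cs delroot_def insL_subI)
    next
      case False
      have "length cs \<noteq> 0" using ne by simp
      then have "length cs \<ge> 2" using False by linarith
      then obtain L a b where cs: "cs = L @ [a, b]"
        by (metis Suc_le_length_iff append_butlast_last_id append_eq_append_conv2 butlast.simps(2)
            length_0_conv list.distinct(1) numeral_2_eq_2 append_Cons append_Nil)
      have dab: "set (labels a) \<inter> set (labels b) = {}" using PNode.prems(1) cs by (auto simp: distinct_append)
      have del: "del N (PNode v cs) = delroot (L @ [a, b])" using `v = N` cs by simp
      show ?thesis
      proof (cases "beta a < beta b")
        case lt: True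
        obtain u R where b: "b = PNode u R" by (cases b)
        have dr: "del N (PNode v cs) = PNode u (L @ a # R)" unfolding del using lt b by (simp add: delroot_def nth_append)
        have ia: "impAt u (L @ a # R) (length L)"
        proof -
          have "\<not> beta r < beta a" if "r \<in> set R" for r
            using beta_sub[OF that, of u] lt b by simp
          moreover have "\<not> u < beta a" using beta_root[of u R] lt b by simp
          ultimately show ?thesis unfolding impAt_def imP_def elP_def by (auto simp: nth_append)
        qed
        have "PNode N (take (length L) (L @ a # R) @ [(L @ a # R) ! length L, PNode u (drop (Suc (length L)) (L @ a # R))])
             \<in> set (insL N (PNode u (L @ a # R)))" by (rule insL_YI) (use ia in auto)
        then show ?thesis unfolding dr using cs b `v = N` by simp
      next
        case ge: False
        obtain u R where a: "a = PNode u R" by (cases a)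
        have "beta a \<noteq> beta b" using dab beta_in[of a] beta_in[of b] by auto
        then have lt: "beta b < beta a" using ge by simp
        have dr: "del N (PNode v cs) = PNode u (L @ b # R)" unfolding del using ge a by (simp add: delroot_def nth_append)
        have ia: "impAt u (L @ b # R) (length L)"
        proof -
          have "\<not> beta r < beta b" if "r \<in> set R" for r
            using beta_sub[OF that, of u] lt a by simp
          moreover have "\<not> u < beta b" using beta_root[of u R] lt a by simp
          ultimately show ?thesis unfolding impAt_def imP_def elP_def by (auto simp: nth_append)
        qed
        have "PNode N (take (length L) (L @ b # R) @ [PNode u (drop (Suc (length L)) (L @ b # R)), (L @ b # R) ! length L])
             \<in> set (insL N (PNode u (L @ b # R)))" by (rule insL_TI) (use ia in auto)
        then show ?thesis unfolding dr using cs a `v = N` by simp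
      qed
    qed
  next
    case False
    then obtain c where c: "c \<in> set cs" "N \<in> set (labels c)" using PNode.prems(2) by auto
    then obtain A B where cs: "cs = A @ c # B" by (meson split_list)
    have AB: "\<And>x. x \<in> set A \<or> x \<in> set B \<Longrightarrow> N \<notin> set (labels x)"
      using PNode.prems(1) c(2) cs by (auto simp: distinct_append)
    have nAB: "x \<noteq> PNode N [] \<and> del N x = x" if "x \<in> set A \<or> x \<in> set B" for x
    proof -
      have "N \<notin> set (labels x)" by (rule AB[OF that])
      then show ?thesis using del_id[of N x] by auto
    qed
    have fA: "concat (map (\<lambda>c. if c = PNode N [] then [] else [del N c]) A) = map id A"
      by (rule concat_map_single) (use nAB in simp)
    have fB: "concat (map (\<lambda>c. if c = PNode N [] then [] else [del N c]) B) = map id B"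
      by (rule concat_map_single) (use nAB in simp)
    have dT: "del N (PNode v cs) = PNode v (A @ (if c = PNode N [] then [] else [del N c]) @ B)"
      using False cs fA fB by simp
    show ?thesis
    proof (cases "c = PNode N []")
      case True
      have "PNode v (take (length A) (A @ B) @ PNode N [] # drop (length A) (A @ B)) \<in> set (insL N (PNode v (A @ B)))"
        by (rule insL_leafI) simp
      then show ?thesis using dT True cs by simp
    next
      case nl: False
      have IH: "c \<in> set (insL N (del N c))"
        using PNode.IH[OF c(1)] dist_child[OF PNode.prems(1) c(1)] c(2) nl by simp
      have "PNode v ((A @ del N c # B)[length A := c]) \<in> set (insL N (PNode v (A @ del N c # B)))"
        by (rule insL_recI) (use IH in auto)
      then show ?thesis using dT nl cs by simp
    qed
  qed
qed

lemma distinct_concat_map: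
  "distinct xs \<Longrightarrow> (\<And>i. i \<in> set xs \<Longrightarrow> distinct (f i)) \<Longrightarrow>
   (\<And>i j. i \<in> set xs \<Longrightarrow> j \<in> set xs \<Longrightarrow> i \<noteq> j \<Longrightarrow> set (f i) \<inter> set (f j) = {}) \<Longrightarrow>
   distinct (concat (map f xs))"
proof (induction xs)
  case (Cons a xs)
  have "set (f a) \<inter> set (concat (map f xs)) = {}"
    using Cons.prems(1,3) by fastforce
  then show ?case using Cons by (auto simp: distinct_append)
qed simp

lemma distinct_insL: "distinct (labels s) \<Longrightarrow> N \<notin> set (labels s) \<Longrightarrow> distinct (insL N s)"
proof (induction N s rule: insL.induct)
  case (1 N v cs)
  have vN: "v \<noteq> N" using "1.prems"(2) by simp
  have cN: "\<And>c. c \<in> set cs \<Longrightarrow> N \<notin> set (labels c)" using "1.prems"(2) by auto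
  have cv: "\<And>c. c \<in> set cs \<Longrightarrow> v \<notin> set (labels c)" using "1.prems"(1) by auto
  define recs where "recs = concat (map (\<lambda>i. map (\<lambda>s'. PNode v (cs[i := s'])) (insL N (cs ! i))) [0..<length cs])"
  have recs_prop: "\<And>x. x \<in> set recs \<Longrightarrow> root x = v \<and> length (kids x) = length cs"
    unfolding recs_def by auto
  have leaf_prop: "\<And>x. x \<in> set (leafOps N v cs) \<Longrightarrow> root x = v \<and> length (kids x) = Suc (length cs)"
    unfolding mem_leafOps by auto
  have imp_prop: "\<And>x. x \<in> set (impOps N v cs) \<Longrightarrow> root x = N \<and> length (kids x) \<ge> 2"
    unfolding mem_impOps by auto
  have dleaf: "distinct (leafOps N v cs)"
    unfolding leafOps_def
  proof (rule distinct_map[THEN iffD2], intro conjI)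
    show "inj_on (\<lambda>i. PNode v (take i cs @ PNode N [] # drop i cs)) (set [0..<Suc (length cs)])"
    proof (rule inj_onI)
      fix i j assume i: "i \<in> set [0..<Suc (length cs)]" and j: "j \<in> set [0..<Suc (length cs)]"
        and eq: "PNode v (take i cs @ PNode N [] # drop i cs) = PNode v (take j cs @ PNode N [] # drop j cs)"
      have nl: "\<And>k x. x \<in> set (take k cs) \<Longrightarrow> x \<noteq> PNode N []"
        using cN by (metis in_set_takeD labels.simps list.set_intros(1))
      have "takeWhile (\<lambda>x. x \<noteq> PNode N []) (take i cs @ PNode N [] # drop i cs) = take i cs"
        using nl[of _ i] by (simp add: takeWhile_append2)
      moreover have "takeWhile (\<lambda>x. x \<noteq> PNode N []) (take j cs @ PNode N [] # drop j cs) = take j cs"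
        using nl[of _ j] by (simp add: takeWhile_append2)
      ultimately have "take i cs = take j cs" using eq by simp
      then show "i = j" using i j by (metis atLeastLessThan_iff length_take less_Suc_eq_le min.absorb2 set_upt)
    qed
  qed simp
  have dimp: "distinct (impOps N v cs)"
    unfolding impOps_def
  proof (rule distinct_concat_map)
    fix i assume "i \<in> set (filter (impAt v cs) [0..<length cs])"
    then have i: "i < length cs" by simp
    have "root (cs ! i) \<noteq> v" using cv[OF nth_mem[OF i]] by (cases "cs ! i") auto
    then have "cs ! i \<noteq> PNode v (drop (Suc i) cs)" by auto
    then show "distinct [PNode N (take i cs @ [cs ! i, PNode v (drop (Suc i) cs)]),
                         PNode N (take i cs @ [PNode v (drop (Suc i) cs), cs ! i])]" by simp
  next
    fix i j assume "i \<in> set (filter (impAt v cs) [0..<length cs])" "j \<in> set (filter (impAt v cs) [0..<length cs])" and ij: "i \<noteq> j"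
    then have i: "i < length cs" and j: "j < length cs" by auto
    have li: "\<forall>x\<in>set [PNode N (take i cs @ [cs ! i, PNode v (drop (Suc i) cs)]),
                         PNode N (take i cs @ [PNode v (drop (Suc i) cs), cs ! i])]. length (kids x) = i + 2"
      using i by simp
    have lj: "\<forall>x\<in>set [PNode N (take j cs @ [cs ! j, PNode v (drop (Suc j) cs)]),
                         PNode N (take j cs @ [PNode v (drop (Suc j) cs), cs ! j])]. length (kids x) = j + 2"
      using j by simp
    show "set [PNode N (take i cs @ [cs ! i, PNode v (drop (Suc i) cs)]),
                         PNode N (take i cs @ [PNode v (drop (Suc i) cs), cs ! i])] \<inter>
               set [PNode N (take j cs @ [cs ! j, PNode v (drop (Suc j) cs)]),
                         PNode N (take j cs @ [PNode v (drop (Suc j) cs), cs ! j])] = {}"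
      using li lj ij by fastforce
  qed simp
  have drec: "distinct recs"
    unfolding recs_def
  proof (rule distinct_concat_map)
    fix i assume "i \<in> set [0..<length cs]"
    then have i: "i < length cs" by simp
    then have ci: "cs ! i \<in> set cs" by simp
    have "distinct (insL N (cs ! i))"
      using "1.IH"[of i] i dist_child[OF "1.prems"(1) ci] cN[OF ci] by simp
    moreover have "inj_on (\<lambda>s'. PNode v (cs[i := s'])) (set (insL N (cs ! i)))"
    proof (rule inj_onI)
      fix a b assume "PNode v (cs[i := a]) = PNode v (cs[i := b])"
      then have "(cs[i := a]) ! i = (cs[i := b]) ! i" by simp
      then show "a = b" using i by simp
    qed
    ultimately show "distinct (map (\<lambda>s'. PNode v (cs[i := s'])) (insL N (cs ! i)))"
      by (simp add: distinct_map)
  next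
    fix i j assume i: "i \<in> set [0..<length cs]" and j: "j \<in> set [0..<length cs]" and ij: "i \<noteq> j"
    show "set (map (\<lambda>s'. PNode v (cs[i := s'])) (insL N (cs ! i))) \<inter>
          set (map (\<lambda>s'. PNode v (cs[j := s'])) (insL N (cs ! j))) = {}"
    proof (rule ccontr)
      assume "\<not> ?thesis"
      then obtain a b where a: "a \<in> set (insL N (cs ! i))" and b: "b \<in> set (insL N (cs ! j))"
        and eq: "PNode v (cs[i := a]) = PNode v (cs[j := b])" by auto
      have "(cs[i := a]) ! i = (cs[j := b]) ! i" using eq by simp
      then have "a = cs ! i" using i ij by simp
      then have "N \<in> set (labels (cs ! i))" using N_in_insL[OF a] by simp
      then show False using cN[of "cs ! i"] i by simp
    qed
  qed simp
  have "insL N (PNode v cs) = PNode N [PNode v cs] # leafOps N v cs @ impOps N v cs @ recs"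
    unfolding recs_def by simp
  moreover have "set (leafOps N v cs) \<inter> set (impOps N v cs) = {}"
  proof -
    { fix x assume "x \<in> set (leafOps N v cs)" "x \<in> set (impOps N v cs)"
      then have False using leaf_prop[of x] imp_prop[of x] vN by simp }
    then show ?thesis by blast
  qed
  moreover have "set (leafOps N v cs) \<inter> set recs = {}"
  proof -
    { fix x assume "x \<in> set (leafOps N v cs)" "x \<in> set recs"
      then have False using leaf_prop[of x] recs_prop[of x] by simp }
    then show ?thesis by blast
  qed
  moreover have "set (impOps N v cs) \<inter> set recs = {}"
  proof -
    { fix x assume "x \<in> set (impOps N v cs)" "x \<in> set recs"
      then have False using imp_prop[of x] recs_prop[of x] vN by simp }
    then show ?thesis by blast
  qed
  moreover have "PNode N [PNode v cs] \<notin> set (leafOps N v cs)" using leaf_prop[of "PNode N [PNode v cs]"] vN by auto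
  moreover have "PNode N [PNode v cs] \<notin> set (impOps N v cs)" using imp_prop[of "PNode N [PNode v cs]"] by auto
  moreover have "PNode N [PNode v cs] \<notin> set recs" using recs_prop[of "PNode N [PNode v cs]"] vN by auto
  ultimately show ?case using dleaf dimp drec by (simp add: distinct_append Int_Un_distrib)
qed

lemma cnt_leaf:
  assumes xs: "\<forall>b\<in>set xs. b < N" and ys: "\<forall>b\<in>set ys. b < N" and v: "v < N"
  shows "cntL elP (xs @ N # ys) = cntL elP (xs @ ys) + (if ys = [] then 0 else 1)"
        "cntL (imP v) (xs @ N # ys) = cntL (imP v) (xs @ ys)"
proof -
  have e1: "cntL (\<lambda>b r. elP b (r @ N # ys)) xs = cntL (\<lambda>b r. elP b (r @ ys)) xs"
    by (rule cntL_cong) (use xs in \<open>auto simp: elP_def\<close>)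
  have e2: "elP N ys \<longleftrightarrow> ys \<noteq> []" using ys by (cases ys) (auto simp: elP_def)
  show "cntL elP (xs @ N # ys) = cntL elP (xs @ ys) + (if ys = [] then 0 else 1)"
    by (simp add: cntL_append e1 e2)
  have e3: "cntL (\<lambda>b r. imP v b (r @ N # ys)) xs = cntL (\<lambda>b r. imP v b (r @ ys)) xs"
    by (rule cntL_cong) (use xs in \<open>auto simp: elP_def imP_def\<close>)
  have e4: "\<not> imP v N ys" using v by (simp add: imP_def)
  show "cntL (imP v) (xs @ N # ys) = cntL (imP v) (xs @ ys)"
    by (simp add: cntL_append e3 e4)
qed

lemma cnt_YT:
  assumes xs: "\<forall>b\<in>set xs. b < N" and cv: "bc < v" and ys: "\<forall>b\<in>set ys. bc < b"
    and cb: "bc < bv" and cN: "bc < N" and bN: "bv < N"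
  shows "cntL elP (xs @ [bc, bv]) + cntL elP ys = cntL elP (xs @ bc # ys)"
        "cntL (imP N) (xs @ [bc, bv]) + cntL (imP v) ys = Suc (cntL (imP v) (xs @ bc # ys))"
        "cntL elP (xs @ [bv, bc]) + cntL elP ys = Suc (cntL elP (xs @ bc # ys))"
        "cntL (imP N) (xs @ [bv, bc]) + cntL (imP v) ys = cntL (imP v) (xs @ bc # ys)"
proof -
  have el1: "elP b (r @ [bc, bv]) \<longleftrightarrow> elP b (r @ bc # ys)" for b r
    using cb ys by (auto simp: elP_def)
  have el2: "elP b (r @ [bv, bc]) \<longleftrightarrow> elP b (r @ bc # ys)" for b r
    using cb ys by (auto simp: elP_def)
  have p1: "cntL (\<lambda>b r. elP b (r @ [bc, bv])) xs = cntL (\<lambda>b r. elP b (r @ bc # ys)) xs"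
    by (rule cntL_cong) (simp add: el1)
  have p2: "cntL (\<lambda>b r. elP b (r @ [bv, bc])) xs = cntL (\<lambda>b r. elP b (r @ bc # ys)) xs"
    by (rule cntL_cong) (simp add: el2)
  have p3: "cntL (\<lambda>b r. imP N b (r @ [bc, bv])) xs = cntL (\<lambda>b r. imP v b (r @ bc # ys)) xs"
    by (rule cntL_cong) (use xs cv ys cb in \<open>auto simp: imP_def elP_def\<close>)
  have p4: "cntL (\<lambda>b r. imP N b (r @ [bv, bc])) xs = cntL (\<lambda>b r. imP v b (r @ bc # ys)) xs"
    by (rule cntL_cong) (use xs cv ys cb in \<open>auto simp: imP_def elP_def\<close>)
  have q1: "\<not> elP bc ys" using ys by (auto simp: elP_def)
  have q2: "imP v bc ys" using ys cv by (auto simp: imP_def elP_def)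
  have f1: "\<not> elP bc [bv]" "\<And>z. \<not> elP z []" "elP bv [bc]"
    using cb by (auto simp: elP_def)
  have f2: "imP N bc [bv]" "imP N bv []" "\<not> imP N bv [bc]" "imP N bc []"
    using cb cN bN by (auto simp: imP_def elP_def)
  show "cntL elP (xs @ [bc, bv]) + cntL elP ys = cntL elP (xs @ bc # ys)"
    by (simp add: cntL_append p1 q1 f1)
  show "cntL (imP N) (xs @ [bc, bv]) + cntL (imP v) ys = Suc (cntL (imP v) (xs @ bc # ys))"
    by (simp add: cntL_append p3 q2 f2)
  show "cntL elP (xs @ [bv, bc]) + cntL elP ys = Suc (cntL elP (xs @ bc # ys))"
    by (simp add: cntL_append p2 q1 f1)
  show "cntL (imP N) (xs @ [bv, bc]) + cntL (imP v) ys = cntL (imP v) (xs @ bc # ys)"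
    by (simp add: cntL_append p4 q2 f2)
qed

lemma pconst_mult: "[:c:] * p = smult c p"
  by simp

lemma Wloc_ne1: "v \<noteq> 1 \<Longrightarrow> Wloc x t v bs = monom (t ^ cntL elP bs) (cntL (imP v) bs)"
  by (simp add: Wloc_def)

lemma Wloc_leaf:
  assumes "\<forall>b\<in>set xs. b < N" "\<forall>b\<in>set ys. b < N" "v < N"
  shows "Wloc x t v (xs @ N # ys) = smult (if ys = [] then (if v = 1 then x else 1) else t) (Wloc x t v (xs @ ys))"
proof -
  note c = cnt_leaf[OF assms]
  have le: "cntL elP (xs @ ys) \<le> length (xs @ ys)" by (rule cntL_le)
  show ?thesis
  proof (cases "ys = []")
    case True
    have c1: "cntL elP (xs @ N # ys) = cntL elP (xs @ ys)" using c(1) True by simp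
    have "length (xs @ N # ys) - cntL elP (xs @ N # ys) = Suc (length (xs @ ys) - cntL elP (xs @ ys))"
      using c1 le by simp
    then show ?thesis using True unfolding Wloc_def c(2) c1 by (simp add: smult_monom)
  next
    case False
    then have "length (xs @ N # ys) - cntL elP (xs @ N # ys) = length (xs @ ys) - cntL elP (xs @ ys)"
      using c(1) le by simp
    then show ?thesis using False unfolding Wloc_def c(2) by (simp add: smult_monom c(1) mult_ac)
  qed
qed

lemma Wloc_YT:
  assumes "\<forall>b\<in>set xs. b < N" "bc < v" "\<forall>b\<in>set ys. bc < b" "bc < bv" "bc < N" "bv < N"
    and "v \<noteq> 1" "N \<noteq> 1"
  shows "Wloc x t N (xs @ [bc, bv]) * Wloc x t v ys = [:0, 1:] * Wloc x t v (xs @ bc # ys)"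
        "Wloc x t N (xs @ [bv, bc]) * Wloc x t v ys = smult t (Wloc x t v (xs @ bc # ys))"
proof -
  note c = cnt_YT[OF assms(1-6)]
  have Y: "[:0, 1:] = monom (1::real) 1" by (simp add: monom_Suc)
  show "Wloc x t N (xs @ [bc, bv]) * Wloc x t v ys = [:0, 1:] * Wloc x t v (xs @ bc # ys)"
    unfolding Y using assms(7,8) by (simp add: Wloc_ne1 mult_monom power_add[symmetric] c(1) c(2))
  show "Wloc x t N (xs @ [bv, bc]) * Wloc x t v ys = smult t (Wloc x t v (xs @ bc # ys))"
    using assms(7,8) by (simp add: Wloc_ne1 mult_monom smult_monom power_add[symmetric] c(3) c(4))
qed

definition xsum :: "real \<Rightarrow> ptree \<Rightarrow> real" where
  "xsum x s = sum_list (map (\<lambda>l. if l = 1 then x else 1) (labels s))"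

definition Mr :: "real \<Rightarrow> real \<Rightarrow> ptree \<Rightarrow> real poly" where
  "Mr x t s = smult (xsum x s + t * (real (length (labels s)) - 1)) 1
     + smult (real (length (labels s))) [:0, 1:] + smult (real (improper s)) [:t, 1:]"

lemma sum_list_Mr:
  "sum_list (map (Mr x t) cs) =
     smult (sum_list (map (xsum x) cs) + t * (real (sum_list (map (\<lambda>c. length (labels c)) cs)) - real (length cs))) 1
   + smult (real (sum_list (map (\<lambda>c. length (labels c)) cs))) [:0, 1:]
   + smult (real (sum_list (map improper cs))) [:t, 1:]"
  by (induction cs) (simp_all add: Mr_def smult_add_left algebra_simps)

lemma xsum_PNode: "xsum x (PNode v cs) = (if v = 1 then x else 1) + sum_list (map (xsum x) cs)"
  unfolding xsum_def by (simp add: map_concat sum_list_concat_map comp_def)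

lemma len_labels_PNode: "length (labels (PNode v cs)) = Suc (sum_list (map (\<lambda>c. length (labels c)) cs))"
  by (simp add: length_concat comp_def)

lemma Mr_PNode:
  "Mr x t (PNode v cs) = [:0, 1:] + smult ((if v = 1 then x else 1) + real (length cs) * t) 1
     + smult (real (improper_node v cs)) [:t, 1:] + sum_list (map (Mr x t) cs)"
proof -
  have Y: "smult (real (Suc n)) (p::real poly) = p + smult (real n) p" for n p
    by (simp add: smult_add_left)
  show ?thesis
    unfolding sum_list_Mr Mr_def xsum_PNode len_labels_PNode improper_PNode
    by (simp add: smult_add_left algebra_simps Y)
qed

lemma beta_leaf: "beta (PNode N []) = N"
  unfolding beta_def by simp

lemma Wr_leaf: "N \<noteq> 1 \<Longrightarrow> Wr x t (PNode N []) = 1"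
  by (simp add: Wloc_def)

lemma beta_insL:
  assumes "s'' \<in> set (insL N s)" "\<forall>l\<in>set (labels s). l < N"
  shows "beta s'' = beta s"
proof -
  have "mset (labels s'') = add_mset N (mset (labels s))" by (rule insL_labels[OF assms(1)])
  then have L: "set (labels s'') = insert N (set (labels s))" by (metis set_mset_add_mset_insert set_mset_mset)
  show ?thesis
  proof (rule beta_eqI)
    show "beta s \<in> set (labels s'')" using L beta_in[of s] by simp
    fix l assume "l \<in> set (labels s'')"
    then have "l = N \<or> l \<in> set (labels s)" using L by simp
    then show "beta s \<le> l"
    proof
      assume "l = N" then show ?thesis using assms(2) beta_in[of s] by fastforce
    qed (rule beta_le)
  qed
qed

lemma prod_upd:
  assumes "i < length cs"
  shows "prod_list (map f (cs[i := a])) = prod_list (map f (take i cs)) * f a * prod_list (map f (drop (Suc i) cs))"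
proof -
  have "cs[i := a] = take i cs @ a # drop (Suc i) cs" by (rule upd_conv_take_nth_drop[OF assms])
  then show ?thesis by (simp add: mult.assoc)
qed

lemma prod_nth:
  assumes "i < length cs"
  shows "prod_list (map f cs) = prod_list (map f (take i cs)) * f (cs ! i) * prod_list (map f (drop (Suc i) cs))"
proof -
  have "map f cs = map f (take i cs @ cs ! i # drop (Suc i) cs)"
    using id_take_nth_drop[OF assms] by metis
  then show ?thesis by (simp add: mult.assoc)
qed

lemma sum_list_const_map: "sum_list (map (\<lambda>_. c) xs) = of_nat (length xs) * (c :: 'a :: semiring_1)"
  by (induction xs) (auto simp: algebra_simps)

lemma sum_list_mult_right: "sum_list (map (\<lambda>x. f x * c) xs) = sum_list (map f xs) * (c :: 'a :: semiring_0)"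
  by (induction xs) (simp_all add: algebra_simps)

lemma tY: "[:t, 1:] = smult t 1 + [:0, 1:]"
  by simp

lemma weight:
  assumes "distinct (labels s)" "\<forall>l\<in>set (labels s). 0 < l \<and> l < N"
  shows "sum_list (map (Wr x t) (insL N s)) = Mr x t s * Wr x t s"
  using assms
proof (induction N s rule: insL.induct)
  case (1 N v cs)
  define bs where "bs = map beta cs"
  define d where "d = length cs"
  define W where "W = Wr x t (PNode v cs)"
  define recs where "recs = concat (map (\<lambda>i. map (\<lambda>s'. PNode v (cs[i := s'])) (insL N (cs ! i))) [0..<length cs])"
  have lab: "\<And>l. l \<in> set (labels (PNode v cs)) \<Longrightarrow> 0 < l \<and> l < N" using "1.prems"(2) by blast
  have vN: "v < N" "0 < v" using lab[of v] by auto
  have N1: "N \<noteq> 1" using vN by simp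
  have clab: "\<And>c l. c \<in> set cs \<Longrightarrow> l \<in> set (labels c) \<Longrightarrow> 0 < l \<and> l < N"
    using lab by auto
  have bN: "\<And>c. c \<in> set cs \<Longrightarrow> beta c < N" using clab beta_in by blast
  have bsN: "\<forall>b\<in>set bs. b < N" unfolding bs_def using bN by auto
  have Wd: "W = Wloc x t v bs * prod_list (map (Wr x t) cs)" unfolding W_def bs_def by simp
  have S1: "Wr x t (PNode N [PNode v cs]) = [:0, 1:] * W"
  proof -
    have b: "beta (PNode v cs) < N" using lab beta_in by blast
    have "Wloc x t N [beta (PNode v cs)] = monom 1 1"
      using N1 b by (simp add: Wloc_def imP_def elP_def)
    then show ?thesis unfolding W_def by (simp add: monom_Suc)
  qed
  have S2: "sum_list (map (Wr x t) (leafOps N v cs)) = smult ((if v = 1 then x else 1) + real d * t) W"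
  proof -
    have one: "Wr x t (PNode v (take i cs @ PNode N [] # drop i cs)) =
        smult (if i = d then (if v = 1 then x else 1) else t) W" if i: "i \<le> d" for i
    proof -
      have mb: "map beta (take i cs @ PNode N [] # drop i cs) = take i bs @ N # drop i bs"
        unfolding bs_def by (simp add: beta_leaf take_map drop_map)
      have pr: "prod_list (map (Wr x t) (take i cs @ PNode N [] # drop i cs)) = prod_list (map (Wr x t) cs)"
      proof -
        have "prod_list (map (Wr x t) cs) = prod_list (map (Wr x t) (take i cs)) * prod_list (map (Wr x t) (drop i cs))"
          by (metis append_take_drop_id map_append prod_list.append)
        then show ?thesis using Wr_leaf[OF N1] by simp
      qed
      have wl: "Wloc x t v (take i bs @ N # drop i bs) =
          smult (if drop i bs = [] then (if v = 1 then x else 1) else t) (Wloc x t v (take i bs @ drop i bs))"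
        by (rule Wloc_leaf) (use bsN vN in \<open>auto dest: in_set_takeD in_set_dropD\<close>)
      have dd: "drop i bs = [] \<longleftrightarrow> i = d" using i unfolding d_def bs_def by auto
      have "Wr x t (PNode v (take i cs @ PNode N [] # drop i cs)) =
          Wloc x t v (take i bs @ N # drop i bs) * prod_list (map (Wr x t) cs)"
        by (simp only: Wr.simps mb pr)
      also have "\<dots> = smult (if i = d then (if v = 1 then x else 1) else t) (Wloc x t v bs) * prod_list (map (Wr x t) cs)"
        unfolding wl dd append_take_drop_id ..
      finally show ?thesis unfolding Wd by (simp add: mult_smult_left)
    qed
    have "sum_list (map (Wr x t) (leafOps N v cs)) =
        sum_list (map (\<lambda>i. smult (if i = d then (if v = 1 then x else 1) else t) W) [0..<Suc d])"
      unfolding leafOps_def d_def[symmetric] map_map comp_def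
      by (rule arg_cong[where f = sum_list], rule map_cong[OF refl], rule one) auto
    also have "\<dots> = sum_list (map (\<lambda>i. smult t W) [0..<d]) + smult (if v = 1 then x else 1) W"
    proof -
      have e: "map (\<lambda>i. smult (if i = d then (if v = 1 then x else 1) else t) W) [0..<d] = map (\<lambda>i. smult t W) [0..<d]"
        by (rule map_cong[OF refl]) simp
      have u: "[0..<Suc d] = [0..<d] @ [d]" by simp
      show ?thesis unfolding u map_append sum_list_append e by simp
    qed
    also have "\<dots> = smult ((if v = 1 then x else 1) + real d * t) W"
      by (simp add: sum_list_const_map smult_add_left of_nat_poly mult.commute)
    finally show ?thesis .
  qed
  have S3: "sum_list (map (Wr x t) (impOps N v cs)) = smult (real (improper_node v cs)) ([:t, 1:] * W)"
  proof -
    have one: "Wr x t (PNode N (take i cs @ [cs ! i, PNode v (drop (Suc i) cs)]))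
             + Wr x t (PNode N (take i cs @ [PNode v (drop (Suc i) cs), cs ! i])) = [:t, 1:] * W"
      if i: "i < length cs" and ia: "impAt v cs i" for i
    proof -
      define A B c where "A = take i cs" "B = drop (Suc i) cs" "c = cs ! i"
      have cs: "cs = A @ c # B" unfolding A_B_c_def by (rule id_take_nth_drop[OF i])
      have im: "imP v (beta c) (map beta B)" using ia unfolding impAt_def A_B_c_def by (simp add: drop_map)
      have dd: "distinct (labels (PNode v (A @ c # B)))" using "1.prems"(1) cs by simp
      have lt1: "beta c < v" "\<And>b. b \<in> set B \<Longrightarrow> beta c < beta b" "beta c < beta (PNode v B)"
        using beta_imP[OF dd im] by auto
      have cin: "c \<in> set cs" using cs by simp
      have Ain: "\<And>a. a \<in> set A \<Longrightarrow> a \<in> set cs" using cs by simp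
      have c0: "0 < beta c" using clab[OF cin beta_in[of c]] by simp
      have v1: "v \<noteq> 1" using lt1(1) c0 by simp
      have bvN: "beta (PNode v B) < N" using beta_root[of v B] vN by simp
      have WL: "Wloc x t N (map beta A @ [beta c, beta (PNode v B)]) * Wloc x t v (map beta B)
              = [:0, 1:] * Wloc x t v (map beta A @ beta c # map beta B)"
           "Wloc x t N (map beta A @ [beta (PNode v B), beta c]) * Wloc x t v (map beta B)
              = smult t (Wloc x t v (map beta A @ beta c # map beta B))"
        by (rule Wloc_YT; use bN Ain cin lt1 bvN v1 N1 in auto)+
      define R where "R = prod_list (map (Wr x t) A) * Wr x t c * prod_list (map (Wr x t) B)"
      have WW: "W = Wloc x t v (map beta A @ beta c # map beta B) * R"
        unfolding W_def R_def cs by (simp add: mult_ac)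
      have WY: "Wr x t (PNode N (A @ [c, PNode v B])) =
          (Wloc x t N (map beta A @ [beta c, beta (PNode v B)]) * Wloc x t v (map beta B)) * R"
        unfolding R_def by (simp add: mult_ac)
      have WT: "Wr x t (PNode N (A @ [PNode v B, c])) =
          (Wloc x t N (map beta A @ [beta (PNode v B), beta c]) * Wloc x t v (map beta B)) * R"
        unfolding R_def by (simp add: mult_ac)
      have "Wr x t (PNode N (A @ [c, PNode v B])) + Wr x t (PNode N (A @ [PNode v B, c])) = [:t, 1:] * W"
        unfolding WY WT WL WW by (simp add: mult_smult_left algebra_simps)
      then show ?thesis unfolding A_B_c_def .
    qed
    have "sum_list (map (Wr x t) (impOps N v cs)) =
        sum_list (map (\<lambda>i. Wr x t (PNode N (take i cs @ [cs ! i, PNode v (drop (Suc i) cs)]))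
             + Wr x t (PNode N (take i cs @ [PNode v (drop (Suc i) cs), cs ! i]))) (filter (impAt v cs) [0..<length cs]))"
      unfolding impOps_def by (simp add: map_concat sum_list_concat_map comp_def)
    also have "\<dots> = sum_list (map (\<lambda>i. [:t, 1:] * W) (filter (impAt v cs) [0..<length cs]))"
      by (rule arg_cong[where f = sum_list], rule map_cong[OF refl], rule one) auto
    also have "\<dots> = of_nat (length (filter (impAt v cs) [0..<length cs])) * ([:t, 1:] * W)"
      by (rule sum_list_const_map)
    also have "length (filter (impAt v cs) [0..<length cs]) = improper_node v cs"
    proof -
      have "filter (impAt v cs) [0..<length cs] = filter (\<lambda>i. imP v (bs ! i) (drop (Suc i) bs)) [0..<length bs]"
        unfolding bs_def by (rule filter_cong) (auto simp: impAt_def)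
      then show ?thesis using filter_cntL[of "imP v" bs] improper_node_cntL[of v cs] unfolding bs_def by simp
    qed
    finally show ?thesis by (simp add: of_nat_poly)
  qed
  have S4: "sum_list (map (Wr x t) recs) = sum_list (map (Mr x t) cs) * W"
  proof -
    have one: "sum_list (map (\<lambda>s'. Wr x t (PNode v (cs[i := s']))) (insL N (cs ! i))) = Mr x t (cs ! i) * W"
      if i: "i < length cs" for i
    proof -
      have ci: "cs ! i \<in> set cs" using i by simp
      define K where "K = Wloc x t v bs * (prod_list (map (Wr x t) (take i cs)) * prod_list (map (Wr x t) (drop (Suc i) cs)))"
      have e: "Wr x t (PNode v (cs[i := s'])) = K * Wr x t s'" if s': "s' \<in> set (insL N (cs ! i))" for s'
      proof -
        have "beta s' = beta (cs ! i)" by (rule beta_insL[OF s']) (use clab[OF ci] in auto)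
        moreover have "(map beta cs)[i := beta (cs ! i)] = map beta cs"
        proof -
          have bi: "beta (cs ! i) = (map beta cs) ! i" using i by simp
          show ?thesis by (simp only: bi list_update_id)
        qed
        ultimately have "map beta (cs[i := s']) = bs" unfolding bs_def by (simp add: map_update)
        then show ?thesis unfolding K_def using prod_upd[OF i, of "Wr x t" s'] by (simp add: mult_ac)
      qed
      have "sum_list (map (\<lambda>s'. Wr x t (PNode v (cs[i := s']))) (insL N (cs ! i)))
          = sum_list (map (\<lambda>s'. K * Wr x t s') (insL N (cs ! i)))"
        by (rule arg_cong[where f = sum_list], rule map_cong[OF refl], rule e)
      also have "\<dots> = K * sum_list (map (Wr x t) (insL N (cs ! i)))"
        by (simp add: sum_list_const_mult)
      also have "sum_list (map (Wr x t) (insL N (cs ! i))) = Mr x t (cs ! i) * Wr x t (cs ! i)"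
        using "1.IH"[of i] i dist_child(1)[OF "1.prems"(1) ci] clab[OF ci] by simp
      also have "K * (Mr x t (cs ! i) * Wr x t (cs ! i)) = Mr x t (cs ! i) * W"
        unfolding K_def Wd prod_nth[OF i, of "Wr x t"] by (simp add: mult_ac)
      finally show ?thesis .
    qed
    have "sum_list (map (Wr x t) recs) =
        sum_list (map (\<lambda>i. sum_list (map (\<lambda>s'. Wr x t (PNode v (cs[i := s']))) (insL N (cs ! i)))) [0..<length cs])"
      unfolding recs_def by (simp add: map_concat sum_list_concat_map comp_def)
    also have "\<dots> = sum_list (map (\<lambda>i. Mr x t (cs ! i) * W) [0..<length cs])"
      by (rule arg_cong[where f = sum_list], rule map_cong[OF refl], rule one) auto
    also have "\<dots> = sum_list (map (\<lambda>i. Mr x t (cs ! i)) [0..<length cs]) * W"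
      by (rule sum_list_mult_right)
    also have "map (\<lambda>i. Mr x t (cs ! i)) [0..<length cs] = map (Mr x t) cs"
    proof -
      have "map (\<lambda>i. Mr x t (cs ! i)) [0..<length cs] = map (Mr x t) (map (\<lambda>i. cs ! i) [0..<length cs])"
        by (simp only: map_map comp_def)
      then show ?thesis by (simp only: map_nth)
    qed
    finally show ?thesis .
  qed
  have "insL N (PNode v cs) = PNode N [PNode v cs] # leafOps N v cs @ impOps N v cs @ recs"
    unfolding recs_def by simp
  then have "sum_list (map (Wr x t) (insL N (PNode v cs))) =
      Wr x t (PNode N [PNode v cs]) + sum_list (map (Wr x t) (leafOps N v cs))
      + sum_list (map (Wr x t) (impOps N v cs)) + sum_list (map (Wr x t) recs)"
    by (simp add: add.assoc)
  also have "\<dots> = Mr x t (PNode v cs) * W"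
    unfolding S1 S2 S3 S4 Mr_PNode d_def by (simp only: distrib_right mult_smult_left mult_1_left)
  finally show ?case unfolding W_def .
qed

definition Trees :: "nat \<Rightarrow> ptree set" where
  "Trees n = {T. distinct (labels T) \<and> set (labels T) = {1..n}}"

definition Gp :: "real \<Rightarrow> real \<Rightarrow> nat \<Rightarrow> real poly" where
  "Gp x t n = (\<Sum>T\<in>Trees n. Wr x t T)"

lemma mset_ins:
  assumes "mset ys = add_mset N (mset xs)"
  shows "set ys = insert N (set xs)" "length ys = Suc (length xs)"
    "distinct ys \<longleftrightarrow> distinct xs \<and> N \<notin> set xs"
proof -
  have "set_mset (mset ys) = set_mset (add_mset N (mset xs))" using assms by (rule arg_cong)
  then show s: "set ys = insert N (set xs)" by simp
  have "size (mset ys) = size (add_mset N (mset xs))" using assms by (rule arg_cong)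
  then show l: "length ys = Suc (length xs)" by simp
  show "distinct ys \<longleftrightarrow> distinct xs \<and> N \<notin> set xs"
  proof
    assume d: "distinct ys"
    then have c: "card (set ys) = Suc (length xs)" using l distinct_card[OF d] by simp
    have cl: "card (set xs) \<le> length xs" by (rule card_length)
    show "distinct xs \<and> N \<notin> set xs"
    proof (cases "N \<in> set xs")
      case True
      then have "card (set ys) = card (set xs)" using s by (simp add: insert_absorb)
      then show ?thesis using c cl by simp
    next
      case False
      then have "card (set ys) = Suc (card (set xs))" using s by simp
      then have "card (set xs) = length xs" using c by simp
      then show ?thesis using False card_distinct by blast
    qed
  next
    assume "distinct xs \<and> N \<notin> set xs"
    then have "card (set ys) = length ys" using s l by (simp add: distinct_card)
    then show "distinct ys" by (rule card_distinct)
  qed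
qed

lemma Trees_zero: "Trees 0 = {}"
  unfolding Trees_def using labels_ne by auto

lemma Trees_one: "Trees (Suc 0) = {PNode 1 []}"
proof
  show "Trees (Suc 0) \<subseteq> {PNode 1 []}"
  proof
    fix T assume "T \<in> Trees (Suc 0)"
    then have d: "distinct (labels T)" and s: "set (labels T) = {1}" unfolding Trees_def by auto
    have "length (labels T) = 1" using distinct_card[OF d] s by simp
    moreover obtain v cs where T: "T = PNode v cs" by (cases T)
    ultimately have "concat (map labels cs) = []" "v = 1" using s by auto
    then have "cs = []" using labels_ne by (cases cs) auto
    then show "T \<in> {PNode 1 []}" using T \<open>v = 1\<close> by simp
  qed
  show "{PNode 1 []} \<subseteq> Trees (Suc 0)" unfolding Trees_def by simp
qed

lemma Trees_Suc:
  assumes "1 \<le> n"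
  shows "Trees (Suc n) = (\<Union>T\<in>Trees n. set (insL (Suc n) T))"
proof
  show "Trees (Suc n) \<subseteq> (\<Union>T\<in>Trees n. set (insL (Suc n) T))"
  proof
    fix T' assume "T' \<in> Trees (Suc n)"
    then have d: "distinct (labels T')" and s: "set (labels T') = {1..Suc n}" unfolding Trees_def by auto
    have Nin: "Suc n \<in> set (labels T')" using s by simp
    have "1 \<in> set (labels T')" using s by simp
    then have nl: "T' \<noteq> PNode (Suc n) []" using assms by auto
    have c: "T' \<in> set (insL (Suc n) (del (Suc n) T'))" by (rule insL_cover[OF d Nin nl])
    note m = mset_ins[OF insL_labels[OF c]]
    have "distinct (labels (del (Suc n) T')) \<and> Suc n \<notin> set (labels (del (Suc n) T'))" using m(3) d by simp
    then have "distinct (labels (del (Suc n) T'))" "Suc n \<notin> set (labels (del (Suc n) T'))" by blast+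
    moreover have "set (labels (del (Suc n) T')) = {1..n}"
    proof -
      have "insert (Suc n) (set (labels (del (Suc n) T'))) = {1..Suc n}" using m(1) s by simp
      then have "set (labels (del (Suc n) T')) = {1..Suc n} - {Suc n}" using calculation(2) by blast
      also have "{1..Suc n} - {Suc n} = {1..n}" by (auto simp: atLeastAtMostSuc_conv)
      finally show ?thesis .
    qed
    ultimately have "del (Suc n) T' \<in> Trees n" unfolding Trees_def by simp
    then show "T' \<in> (\<Union>T\<in>Trees n. set (insL (Suc n) T))" using c by blast
  qed
  show "(\<Union>T\<in>Trees n. set (insL (Suc n) T)) \<subseteq> Trees (Suc n)"
  proof
    fix T' assume "T' \<in> (\<Union>T\<in>Trees n. set (insL (Suc n) T))"
    then obtain T where T: "T \<in> Trees n" and T': "T' \<in> set (insL (Suc n) T)" by blast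
    note m = mset_ins[OF insL_labels[OF T']]
    have dT: "distinct (labels T)" and sT: "set (labels T) = {1..n}" using T unfolding Trees_def by auto
    have "distinct (labels T')" using m(3) dT sT by simp
    moreover have "set (labels T') = {1..Suc n}" using m(1) sT by (simp add: atLeastAtMostSuc_conv)
    ultimately show "T' \<in> Trees (Suc n)" unfolding Trees_def by simp
  qed
qed

lemma finite_Trees: "finite (Trees n)"
proof (induction n)
  case 0 then show ?case by (simp add: Trees_zero)
next
  case (Suc n)
  show ?case
  proof (cases "n = 0")
    case True then show ?thesis by (simp add: Trees_one)
  next
    case False
    then show ?thesis using Trees_Suc[of n] Suc by simp
  qed
qed

lemma pderiv_sum': "pderiv (sum f A) = (\<Sum>x\<in>A. pderiv (f x))"
  by (induction A rule: infinite_finite_induct) (auto simp: pderiv_add)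

lemma smult_sum_right: "smult c (sum f A) = (\<Sum>x\<in>A. smult c (f x))"
  by (induction A rule: infinite_finite_induct) (auto simp: smult_add_right)

lemma Y_pderiv_monom: "[:0, 1:] * pderiv (monom a k) = smult (real k) (monom (a::real) k)"
proof (cases k)
  case 0 then show ?thesis by (simp add: pderiv_monom)
next
  case (Suc m)
  have "[:0, 1:] * monom b m = monom b (Suc m)" for b :: real
    by (simp add: monom_Suc)
  then show ?thesis using Suc by (simp add: pderiv_monom smult_monom)
qed

lemma sum_labels_Trees:
  assumes "T \<in> Trees n"
  shows "xsum x T = x + (real n - 1)" "length (labels T) = n"
proof -
  have d: "distinct (labels T)" and s: "set (labels T) = {1..n}" using assms unfolding Trees_def by auto
  show l: "length (labels T) = n" using distinct_card[OF d] s by simp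
  obtain a where "a \<in> set (labels T)" using labels_ne[of T] by (cases "labels T") auto
  then have n1: "1 \<le> n" using s by auto
  have "xsum x T = (\<Sum>l\<in>{1..n}. if l = 1 then x else 1)"
    unfolding xsum_def using sum_list_distinct_conv_sum_set[OF d] s by simp
  also have "\<dots> = (\<Sum>l\<in>insert 1 {2..n}. if l = 1 then x else 1)"
    using n1 by (simp add: Icc_eq_insert_lb_nat numeral_2_eq_2)
  also have "\<dots> = x + (\<Sum>l\<in>{2..n}. 1)" by simp
  also have "\<dots> = x + (real n - 1)" using n1 by simp
  finally show "xsum x T = x + (real n - 1)" .
qed

lemma Gp_Suc:
  assumes "1 \<le> n"
  shows "Gp x t (Suc n) = smult (x + (real n - 1) + t * (real n - 1)) (Gp x t n)
     + smult (real n) ([:0, 1:] * Gp x t n) + [:t, 1:] * ([:0, 1:] * pderiv (Gp x t n))"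
proof -
  have fin: "finite (Trees n)" by (rule finite_Trees)
  have disj: "\<forall>T1\<in>Trees n. \<forall>T2\<in>Trees n. T1 \<noteq> T2 \<longrightarrow> set (insL (Suc n) T1) \<inter> set (insL (Suc n) T2) = {}"
  proof (intro ballI impI)
    fix T1 T2 assume T1: "T1 \<in> Trees n" and T2: "T2 \<in> Trees n" and ne: "T1 \<noteq> T2"
    have h1: "distinct (labels T1)" "Suc n \<notin> set (labels T1)" using T1 unfolding Trees_def by auto
    have h2: "distinct (labels T2)" "Suc n \<notin> set (labels T2)" using T2 unfolding Trees_def by auto
    show "set (insL (Suc n) T1) \<inter> set (insL (Suc n) T2) = {}"
      using del_insL[OF h1] del_insL[OF h2] ne by blast
  qed
  have "Gp x t (Suc n) = (\<Sum>T\<in>Trees n. \<Sum>T'\<in>set (insL (Suc n) T). Wr x t T')"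
    unfolding Gp_def Trees_Suc[OF assms] by (rule sum.UNION_disjoint) (use fin disj in auto)
  also have "\<dots> = (\<Sum>T\<in>Trees n. Mr x t T * Wr x t T)"
  proof (rule sum.cong[OF refl])
    fix T assume T: "T \<in> Trees n"
    have d: "distinct (labels T)" and s: "set (labels T) = {1..n}" using T unfolding Trees_def by auto
    have "Suc n \<notin> set (labels T)" using s by simp
    then have dist: "distinct (insL (Suc n) T)" by (rule distinct_insL[OF d])
    have "(\<Sum>T'\<in>set (insL (Suc n) T). Wr x t T') = sum_list (map (Wr x t) (insL (Suc n) T))"
      by (rule sum_list_distinct_conv_sum_set[OF dist, symmetric])
    also have "\<dots> = Mr x t T * Wr x t T" by (rule weight) (use d s in auto)
    finally show "(\<Sum>T'\<in>set (insL (Suc n) T). Wr x t T') = Mr x t T * Wr x t T" .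
  qed
  also have "\<dots> = (\<Sum>T\<in>Trees n. smult (x + (real n - 1) + t * (real n - 1)) (Wr x t T)
       + smult (real n) ([:0, 1:] * Wr x t T) + [:t, 1:] * smult (real (improper T)) (Wr x t T))"
  proof (rule sum.cong[OF refl])
    fix T assume T: "T \<in> Trees n"
    show "Mr x t T * Wr x t T = smult (x + (real n - 1) + t * (real n - 1)) (Wr x t T)
       + smult (real n) ([:0, 1:] * Wr x t T) + [:t, 1:] * smult (real (improper T)) (Wr x t T)"
      unfolding Mr_def sum_labels_Trees[OF T]
      by (simp only: distrib_right mult_smult_left mult_1_left mult_smult_right)
  qed
  also have "\<dots> = smult (x + (real n - 1) + t * (real n - 1)) (Gp x t n)
     + smult (real n) ([:0, 1:] * Gp x t n) + [:t, 1:] * (\<Sum>T\<in>Trees n. smult (real (improper T)) (Wr x t T))"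
    unfolding Gp_def by (simp add: sum.distrib smult_sum_right sum_distrib_left)
  also have "(\<Sum>T\<in>Trees n. smult (real (improper T)) (Wr x t T)) = [:0, 1:] * pderiv (Gp x t n)"
    unfolding Gp_def pderiv_sum' sum_distrib_left Wr_eq Y_pderiv_monom ..
  finally show ?thesis .
qed

lemma Qy_Gp: "1 \<le> n \<Longrightarrow> Qy n (x - t - 1) 1 t = Gp x t n"
proof (induction n rule: dec_induct)
  case base
  show ?case by (simp add: Gp_def Trees_one Wloc_def)
next
  case (step n)
  obtain m where n: "n = Suc m" using step(1) by (cases n) auto
  have "Qy (Suc n) (x - t - 1) 1 t = smult (x - t - 1 + real n) (Gp x t n)
      + [:t, 1:] * (smult (real n) (Gp x t n) + [:0, 1:] * pderiv (Gp x t n))"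
    using step(3) unfolding n by (simp add: Let_def)
  also have "\<dots> = Gp x t (Suc n)"
    unfolding Gp_Suc[OF step(1)]
    by (rule poly_eq_poly_eq_iff[THEN iffD1], rule ext) (simp add: algebra_simps)
  finally show ?case .
qed

theorem theorem2p2:
  fixes n k :: nat and x t :: real
  assumes "1 \<le> n" and "k \<le> n - 1"
  shows "Qnk n k (x - t - 1) t = (\<Sum>T\<in>P n k. x ^ young_at T 1 * t ^ eld T)"
proof -
  have "Qnk n k (x - t - 1) t = coeff (Gp x t n) k"
    unfolding Qnk_def Qy_Gp[OF assms(1)] ..
  also have "\<dots> = (\<Sum>T\<in>Trees n. coeff (Wr x t T) k)"
    unfolding Gp_def by (rule coeff_sum)
  also have "\<dots> = (\<Sum>T\<in>Trees n. if improper T = k then x ^ young_at T 1 * t ^ eld T else 0)"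
    by (rule sum.cong[OF refl]) (simp add: Wr_eq coeff_monom)
  also have "\<dots> = (\<Sum>T\<in>{T \<in> Trees n. improper T = k}. x ^ young_at T 1 * t ^ eld T)"
    by (rule sum.inter_filter[symmetric]) (rule finite_Trees)
  also have "{T \<in> Trees n. improper T = k} = P n k"
    unfolding P_def Trees_def by auto
  finally show ?thesis .
qed

end
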